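(* In the setting of the augmented system $\Sigma_A$ and its integral augmentation $\Sigma_I$ below, suppose there exists $\sigma\in\mathbb{N}^m$ such that $L_{g_A}L_{f_A}^{i-1}h_k(t,x_A)=0$ for all $(t,x_A)$, all $1\le k\le m$ and all $1\le i\le\sigma_k-1$, and $L_{g_A}L_{f_A}^{\sigma_k-1}h_k(t_0,x_A(t_0))\ne0$ for all $k$. Then $L_{g_I}L_{f_I}^{i-1}h_k(t,x_I)=0$ for all $(t,x_I)$, all $1\le k\le m$ and all $1\le i\le\sigma_k$, and $L_{g_I}L_{f_I}^{\sigma_k}h_k(t_0,x_I(t_0))\ne0$ for all $1\le k\le m$. Moreover, the matrix $\Gamma_{g_I}(t,x_I)\in\mathbb{R}^{m\times m}$ whose $k$-th row is $L_{g_I}L_{f_I}^{\sigma_k}h_k(t,x_I)$ does not have full column rank at any point where $z_i=0$ for some $i\in\{1,\dots,r\}$.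
   Context: Setting: $f,g,h,\phi$ smooth, $r=m$, $\phi$ has relative degree $\rho$ with respect to $(f,g)$ ($L_gL_f^i\phi_k\equiv0$ for $i\le\rho_k-2$, $L_gL_f^{\rho_k-1}\phi_k\ne0$ everywhere), $\Omega_g$ (with $k$-th row $L_gL_f^{\rho_k-1}\phi_k$) invertible everywhere. Time-varying Lie derivatives for vector field $F$, input matrix $G$: $L_F^0\psi=\psi$, $L_F^j\psi=\frac{\partial L_F^{j-1}\psi}{\partial(\text{state})}F+\frac{\partial L_F^{j-1}\psi}{\partial t}$, $L_GL_F^j\psi=\frac{\partial L_F^j\psi}{\partial(\text{state})}G$. $S_{k,i-1}=\tfrac12\sum_{j=1}^{i-1}\binom{i}{j}z_k^{(i-j)}z_k^{(j)}$; $\Omega_f$ has $k$-th entry $S_{k,\rho_k-1}+L_f^{\rho_k}\phi_k$; $D(z)=\mathrm{diag}(z_1,\dots,z_r)$. Augmented system $\Sigma_A$ on $x_A=(x,\tilde z)$, $\tilde z=(z_k^{(j)})_{k\le r,\,0\le j\le\rho_k-1}$, dimension $n_A=n+\sum_k\rho_k$: $\dot x_A=f_A+g_Aw$ with $x$-block of $f_A$ equal to $f-g\Omega_g^{-1}\Omega_f$, $z_k$-block $(z_k^{(1)},\dots,z_k^{(\rho_k-1)},0)$; $x$-block of $g_A$ equal to $-g\Omega_g^{-1}D(z)$, $z_k$-block zero except last row $e_k^\top$. Output $h_A(t,x_A)=h(t,x)$. Integral augmentation $\Sigma_I$ with parameter $\beta>0$: state $x_I=(x_A,\xi)\in\mathbb{R}^{n_A+m}$,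 $\dot x_I=f_I(t,x_I)+g_I(t,x_I)\tilde w$, $f_I=\big(f_A(t,x_A)+g_A(t,x_A)s_\beta(\xi),\,0_{m\times1}\big)$, $g_I=\begin{bmatrix}0_{n_A\times m}\\ I_m\end{bmatrix}$, output $h(t,x)$; $s_\beta$ acts componentwise, $s_{\beta,i}(\xi)=2\beta\big(\frac{1}{e^{-\xi_i}+1}-\tfrac12\big)$. $x_A(t_0)$ and $x_I(t_0)=(x_A(t_0),\xi(t_0))$ are fixed initial states. *)

theory Defs
  imports "HOL-Analysis.Analysis"
begin

text \<open>In finite dimensions this is exactly C-infinity.\<close>

coinductive smooth :: "('a::real_normed_vector \<Rightarrow> 'b::real_normed_vector) \<Rightarrow> bool" where
  "(\<forall>x. F differentiable (at x)) \<Longrightarrow>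
   (\<forall>v. smooth (\<lambda>x. frechet_derivative F (at x) v)) \<Longrightarrow> smooth F"

definition lie :: "(real \<Rightarrow> 'a::euclidean_space \<Rightarrow> 'a) \<Rightarrow> (real \<Rightarrow> 'a \<Rightarrow> real) \<Rightarrow> real \<Rightarrow> 'a \<Rightarrow> real"
  where "lie F \<psi> t x = frechet_derivative (\<psi> t) (at x) (F t x) + deriv (\<lambda>s. \<psi> s x) t"

definition lie_pow :: "(real \<Rightarrow> 'a::euclidean_space \<Rightarrow> 'a) \<Rightarrow> nat \<Rightarrow> (real \<Rightarrow> 'a \<Rightarrow> real) \<Rightarrow> real \<Rightarrow> 'a \<Rightarrow> real"
  where "lie_pow F j \<psi> = (lie F ^^ j) \<psi>"

text \<open>Lie derivative along an input matrix G, given by its columns: G t x $ j is the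
  j-th column. The result is the row vector with j-th entry (d psi / d state) (column j).\<close>
definition lieG :: "(real \<Rightarrow> 'a::euclidean_space \<Rightarrow> 'a^'m) \<Rightarrow> (real \<Rightarrow> 'a \<Rightarrow> real) \<Rightarrow> real \<Rightarrow> 'a \<Rightarrow> real^'m"
  where "lieG G \<psi> t x = (\<chi> j. frechet_derivative (\<psi> t) (at x) (G t x $ j))"

definition cols :: "(real \<Rightarrow> 'b \<Rightarrow> real^'m^'n) \<Rightarrow> real \<Rightarrow> 'b \<Rightarrow> (real^'n)^'m"
  where "cols g t x = transpose (g t x)"

definition colmult :: "('a::real_vector)^'m \<Rightarrow> real^'m \<Rightarrow> 'a"
  where "colmult G w = (\<Sum>j\<in>UNIV. w $ j *\<^sub>R G $ j)"

definition diagm :: "real^'m \<Rightarrow> real^'m^'m"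
  where "diagm z = (\<chi> i j. if i = j then z $ i else 0)"

text \<open>The stacked vector z-tilde is an element of real^'z where the finite type 'z is
  enumerated by idx :: 'z => 'm \<times> nat, a bijection onto {(k,j). j < rho k};
  coordinate q carries z_k^(j) where idx q = (k,j).\<close>
definition zc :: "('z \<Rightarrow> 'm \<times> nat) \<Rightarrow> real^'z \<Rightarrow> 'm \<Rightarrow> nat \<Rightarrow> real"
  where "zc idx zt k j = zt $ (inv idx (k, j))"

text \<open>z = (z_1, ..., z_r) with z_k = z_k^(0).\<close>
definition zvec :: "('z \<Rightarrow> 'm \<times> nat) \<Rightarrow> real^'z \<Rightarrow> real^'m"
  where "zvec idx zt = (\<chi> k. zc idx zt k 0)"

text \<open>S_{k,p} = 1/2 sum_{j=1}^{p} binom(p+1,j) z_k^(p+1-j) z_k^(j)  (i.e. S_{k,i-1} with i = p+1).\<close>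
definition Scoef :: "('z \<Rightarrow> 'm \<times> nat) \<Rightarrow> real^'z \<Rightarrow> 'm \<Rightarrow> nat \<Rightarrow> real"
  where "Scoef idx zt k p = (1/2) * (\<Sum>j\<in>{1..p}. real ((p+1) choose j) * zc idx zt k (p+1-j) * zc idx zt k j)"

definition Omega_g :: "(real \<Rightarrow> real^'n \<Rightarrow> real^'n) \<Rightarrow> (real \<Rightarrow> real^'n \<Rightarrow> real^'m^'n)
   \<Rightarrow> (real \<Rightarrow> real^'n \<Rightarrow> real^'m) \<Rightarrow> ('m \<Rightarrow> nat) \<Rightarrow> real \<Rightarrow> real^'n \<Rightarrow> real^'m^'m"
  where "Omega_g f g \<phi> \<rho> t x = (\<chi> k. lieG (cols g) (lie_pow f (\<rho> k - 1) (\<lambda>s y. \<phi> s y $ k)) t x)"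

definition Omega_f :: "(real \<Rightarrow> real^'n \<Rightarrow> real^'n) \<Rightarrow> (real \<Rightarrow> real^'n \<Rightarrow> real^'m)
   \<Rightarrow> ('m \<Rightarrow> nat) \<Rightarrow> ('z \<Rightarrow> 'm \<times> nat) \<Rightarrow> real \<Rightarrow> real^'n \<Rightarrow> real^'z \<Rightarrow> real^'m"
  where "Omega_f f \<phi> \<rho> idx t x zt =
     (\<chi> k. Scoef idx zt k (\<rho> k - 1) + lie_pow f (\<rho> k) (\<lambda>s y. \<phi> s y $ k) t x)"

definition fA :: "(real \<Rightarrow> real^'n \<Rightarrow> real^'n) \<Rightarrow> (real \<Rightarrow> real^'n \<Rightarrow> real^'m^'n)
   \<Rightarrow> (real \<Rightarrow> real^'n \<Rightarrow> real^'m) \<Rightarrow> ('m \<Rightarrow> nat) \<Rightarrow> ('z \<Rightarrow> 'm \<times> nat)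
   \<Rightarrow> real \<Rightarrow> (real^'n) \<times> (real^'z) \<Rightarrow> (real^'n) \<times> (real^'z)"
  where "fA f g \<phi> \<rho> idx t xA =
     (let x = fst xA; zt = snd xA in
       (f t x - g t x *v (matrix_inv (Omega_g f g \<phi> \<rho> t x) *v Omega_f f \<phi> \<rho> idx t x zt),
        \<chi> q. (case idx q of (k, j) \<Rightarrow> if j + 1 < \<rho> k then zc idx zt k (j + 1) else 0)))"

definition gA :: "(real \<Rightarrow> real^'n \<Rightarrow> real^'n) \<Rightarrow> (real \<Rightarrow> real^'n \<Rightarrow> real^'m^'n)
   \<Rightarrow> (real \<Rightarrow> real^'n \<Rightarrow> real^'m) \<Rightarrow> ('m \<Rightarrow> nat) \<Rightarrow> ('z \<Rightarrow> 'm \<times> nat)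
   \<Rightarrow> real \<Rightarrow> (real^'n) \<times> (real^'z) \<Rightarrow> ((real^'n) \<times> (real^'z))^'m"
  where "gA f g \<phi> \<rho> idx t xA =
     (let x = fst xA; zt = snd xA;
          M = - (g t x ** matrix_inv (Omega_g f g \<phi> \<rho> t x) ** diagm (zvec idx zt)) in
       (\<chi> w. (column w M,
              \<chi> q. (case idx q of (k, j) \<Rightarrow> if k = w \<and> j = \<rho> k - 1 then 1 else 0))))"

definition s_beta :: "real \<Rightarrow> real^'m \<Rightarrow> real^'m"
  where "s_beta \<beta> \<xi> = (\<chi> i. 2 * \<beta> * (1 / (exp (- (\<xi> $ i)) + 1) - 1/2))"

definition fI :: "(real \<Rightarrow> 'a::euclidean_space \<Rightarrow> 'a) \<Rightarrow> (real \<Rightarrow> 'a \<Rightarrow> 'a^'m) \<Rightarrow> real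
   \<Rightarrow> real \<Rightarrow> 'a \<times> (real^'m) \<Rightarrow> 'a \<times> (real^'m)"
  where "fI FA GA \<beta> t xI = (FA t (fst xI) + colmult (GA t (fst xI)) (s_beta \<beta> (snd xI)), 0)"

definition gI :: "real \<Rightarrow> 'a::euclidean_space \<times> (real^'m) \<Rightarrow> ('a \<times> (real^'m))^'m"
  where "gI t xI = (\<chi> j. (0, axis j 1))"

end

theory Submission
  imports Defs
begin

lemma smooth_diff: "smooth F \<Longrightarrow> F differentiable (at x)"
  by (erule smooth.cases) auto

lemma smooth_dirc: "smooth F \<Longrightarrow> smooth (\<lambda>x. frechet_derivative F (at x) v)"
  by (erule smooth.cases) auto

lemma smooth_hasd: "smooth F \<Longrightarrow> (F has_derivative frechet_derivative F (at x)) (at x)"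
  using smooth_diff frechet_derivative_works by blast

lemma smooth_coI:
  assumes "X H" and "\<And>H. X H \<Longrightarrow> (\<forall>x. H differentiable at x) \<and> (\<forall>v. X (\<lambda>x. frechet_derivative H (at x) v))"
  shows "smooth H"
  using assms(1) by (rule smooth.coinduct) (use assms(2) in blast)

lemma smooth_const: "smooth (\<lambda>x. c)"
  by (rule smooth_coI[where X="\<lambda>H. \<exists>c. H = (\<lambda>x. c)"]) auto

lemma smooth_linear: 
  fixes L :: "'b::real_normed_vector \<Rightarrow> 'c::real_normed_vector" and F :: "'a::real_normed_vector \<Rightarrow> 'b"
  assumes "bounded_linear L" "smooth F" shows "smooth (\<lambda>x. L (F x))"
proof (rule smooth_coI[where X="\<lambda>H. \<exists>L (F::'a \<Rightarrow> 'b). bounded_linear L \<and> smooth F \<and> H = (\<lambda>x. L (F x))"])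
  show "\<exists>L' (F'::'a \<Rightarrow> 'b). bounded_linear L' \<and> smooth F' \<and> (\<lambda>x. L (F x)) = (\<lambda>x. L' (F' x))"
    using assms by blast
next
  fix H :: "'a \<Rightarrow> 'c"
  assume "\<exists>L (F::'a \<Rightarrow> 'b). bounded_linear L \<and> smooth F \<and> H = (\<lambda>x. L (F x))"
  then obtain L and F :: "'a \<Rightarrow> 'b" where L: "bounded_linear L" and F: "smooth F" and H: "H = (\<lambda>x. L (F x))" by blast
  have hd: "(H has_derivative (\<lambda>v. L (frechet_derivative F (at x) v))) (at x)" for x
    unfolding H using bounded_linear.has_derivative[OF L smooth_hasd[OF F]] .
  have "(\<lambda>x. frechet_derivative H (at x) v) = (\<lambda>x. L (frechet_derivative F (at x) v))" for v
    by (simp add: frechet_derivative_at[OF hd, symmetric])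
  then show "(\<forall>x. H differentiable at x) \<and> (\<forall>v. \<exists>L (F::'a \<Rightarrow> 'b). bounded_linear L \<and> smooth F \<and> (\<lambda>x. frechet_derivative H (at x) v) = (\<lambda>x. L (F x)))"
    using hd differentiable_def L smooth_dirc[OF F] by blast
qed

lemma smooth_add:
  fixes F G :: "'a::real_normed_vector \<Rightarrow> 'c::real_normed_vector"
  assumes "smooth F" "smooth G" shows "smooth (\<lambda>x. F x + G x)"
proof (rule smooth_coI[where X="\<lambda>H. \<exists>F G. smooth F \<and> smooth G \<and> H = (\<lambda>x. F x + G x)"])
  show "\<exists>F' G'. smooth F' \<and> smooth G' \<and> (\<lambda>x. F x + G x) = (\<lambda>x. F' x + G' x)"
    using assms by blast
next
  fix H :: "'a \<Rightarrow> 'c"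
  assume "\<exists>F G. smooth F \<and> smooth G \<and> H = (\<lambda>x. F x + G x)"
  then obtain F G where F: "smooth F" and G: "smooth G" and H: "H = (\<lambda>x. F x + G x)" by blast
  have hd: "(H has_derivative (\<lambda>v. frechet_derivative F (at x) v + frechet_derivative G (at x) v)) (at x)" for x
    unfolding H using has_derivative_add[OF smooth_hasd[OF F] smooth_hasd[OF G]] .
  have "(\<lambda>x. frechet_derivative H (at x) v) = (\<lambda>x. frechet_derivative F (at x) v + frechet_derivative G (at x) v)" for v
    by (simp add: frechet_derivative_at[OF hd, symmetric])
  then show "(\<forall>x. H differentiable at x) \<and> (\<forall>v. \<exists>F G. smooth F \<and> smooth G \<and> (\<lambda>x. frechet_derivative H (at x) v) = (\<lambda>x. F x + G x))"
    using hd differentiable_def smooth_dirc[OF F] smooth_dirc[OF G] by blast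
qed

lemma smooth_sum:
  assumes "finite I" "\<And>i. i \<in> I \<Longrightarrow> smooth (F i)" shows "smooth (\<lambda>x. \<Sum>i\<in>I. F i x)"
  using assms
proof (induction I rule: finite_induct)
  case empty then show ?case by (simp add: smooth_const)
next
  case (insert a I)
  then show ?case by (simp add: smooth_add)
qed

definition psum :: "(('a \<Rightarrow> real) \<times> ('a \<Rightarrow> real)) list \<Rightarrow> 'a \<Rightarrow> real" where
  "psum ps x = (\<Sum>p\<leftarrow>ps. fst p x * snd p x)"

definition psumd where
  "psumd ps v = concat (map (\<lambda>p. [(\<lambda>x. frechet_derivative (fst p) (at x) v, snd p), (fst p, \<lambda>x. frechet_derivative (snd p) (at x) v)]) ps)"

lemma psum_hasd:
  assumes "\<forall>p\<in>set ps. smooth (fst p) \<and> smooth (snd p)"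
  shows "(psum ps has_derivative (\<lambda>v. psum (psumd ps v) x)) (at x)"
  using assms
proof (induction ps)
  case Nil
  then show ?case by (simp add: psum_def psumd_def)
next
  case (Cons p ps)
  have e: "psum (p # ps) = (\<lambda>x. fst p x * snd p x + psum ps x)" by (simp add: psum_def fun_eq_iff)
  show ?case
    unfolding e
    apply (rule has_derivative_eq_rhs)
     apply (rule has_derivative_add)
      apply (rule has_derivative_mult)
       apply (rule smooth_hasd) using Cons apply simp
      apply (rule smooth_hasd) using Cons apply simp
     apply (rule Cons.IH) using Cons apply simp
    apply (simp add: psum_def psumd_def fun_eq_iff algebra_simps)
    done
qed

lemma smooth_psum: "\<forall>p\<in>set ps. smooth (fst p) \<and> smooth (snd p) \<Longrightarrow> smooth (psum ps)"
proof (rule smooth_coI[where X="\<lambda>H. \<exists>ps. (\<forall>p\<in>set ps. smooth (fst p) \<and> smooth (snd p)) \<and> H = psum ps"])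
  fix H :: "'a \<Rightarrow> real"
  assume "\<exists>ps. (\<forall>p\<in>set ps. smooth (fst p) \<and> smooth (snd p)) \<and> H = psum ps"
  then obtain ps where P: "\<forall>p\<in>set ps. smooth (fst p) \<and> smooth (snd p)" and H: "H = psum ps" by blast
  note hd = psum_hasd[OF P]
  have "(\<lambda>x. frechet_derivative H (at x) v) = psum (psumd ps v)" for v
    unfolding H by (simp add: frechet_derivative_at[OF hd, symmetric])
  moreover have "\<forall>p\<in>set (psumd ps v). smooth (fst p) \<and> smooth (snd p)" for v
    using P smooth_dirc by (auto simp: psumd_def)
  ultimately show "(\<forall>x. H differentiable at x) \<and> (\<forall>v. \<exists>ps. (\<forall>p\<in>set ps. smooth (fst p) \<and> smooth (snd p)) \<and> (\<lambda>x. frechet_derivative H (at x) v) = psum ps)"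
    using hd differentiable_def H by blast
qed auto

lemma smooth_mult: "smooth F \<Longrightarrow> smooth G \<Longrightarrow> smooth (\<lambda>x. F x * G x :: real)"
proof -
  assume "smooth F" "smooth G"
  moreover have "psum [(F,G)] = (\<lambda>x. F x * G x)" by (simp add: psum_def fun_eq_iff)
  ultimately show ?thesis using smooth_psum[of "[(F,G)]"] by simp
qed

lemma smooth_dir:
  fixes P :: "'b::euclidean_space \<Rightarrow> real" and V :: "'b \<Rightarrow> 'b"
  assumes P: "smooth P" and V: "smooth V"
  shows "smooth (\<lambda>p. frechet_derivative P (at p) (V p))"
proof -
  have "frechet_derivative P (at p) (V p) = (\<Sum>b\<in>Basis. (V p \<bullet> b) * frechet_derivative P (at p) b)" for p
  proof -
    have lin: "linear (frechet_derivative P (at p))" using linear_frechet_derivative smooth_diff[OF P] by blast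
    have "frechet_derivative P (at p) (V p) = frechet_derivative P (at p) (\<Sum>b\<in>Basis. (V p \<bullet> b) *\<^sub>R b)"
      by (simp add: euclidean_representation)
    also have "\<dots> = (\<Sum>b\<in>Basis. (V p \<bullet> b) * frechet_derivative P (at p) b)"
      using lin by (simp add: linear_sum linear_scale)
    finally show ?thesis .
  qed
  moreover have "smooth (\<lambda>p. \<Sum>b\<in>Basis. (V p \<bullet> b) * frechet_derivative P (at p) b)"
    apply (rule smooth_sum, simp)
    apply (rule smooth_mult)
     apply (rule smooth_linear[OF _ V]) apply (simp add: bounded_linear_inner_left)
    by (rule smooth_dirc[OF P])
  ultimately show ?thesis by simp
qed

definition J :: "(real \<Rightarrow> 'a \<Rightarrow> 'b) \<Rightarrow> real \<times> 'a \<Rightarrow> 'b" where "J \<psi> p = \<psi> (fst p) (snd p)"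

lemma part_x:
  fixes \<psi> :: "real \<Rightarrow> 'a::euclidean_space \<Rightarrow> real"
  assumes "smooth (J \<psi>)"
  shows "(\<psi> t has_derivative (\<lambda>v. frechet_derivative (J \<psi>) (at (t,x)) (0,v))) (at x)"
proof -
  have "((\<lambda>y. (t,y)) has_derivative (\<lambda>v. (0,v))) (at x)"
    by (auto intro!: derivative_eq_intros)
  from diff_chain_at[OF this smooth_hasd[OF assms, of "(t,x)"]]
  show ?thesis by (simp add: o_def J_def)
qed

lemma part_x_fd:
  fixes \<psi> :: "real \<Rightarrow> 'a::euclidean_space \<Rightarrow> real"
  assumes "smooth (J \<psi>)"
  shows "frechet_derivative (\<psi> t) (at x) = (\<lambda>v. frechet_derivative (J \<psi>) (at (t,x)) (0,v))"
  using frechet_derivative_at[OF part_x[OF assms]] by simp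

lemma part_x_lin:
  fixes \<psi> :: "real \<Rightarrow> 'a::euclidean_space \<Rightarrow> real"
  assumes "smooth (J \<psi>)"
  shows "linear (frechet_derivative (\<psi> t) (at x))"
  using part_x[OF assms] frechet_derivative_at has_derivative_linear by metis

lemma part_t:
  fixes \<psi> :: "real \<Rightarrow> 'a::euclidean_space \<Rightarrow> real"
  assumes "smooth (J \<psi>)"
  shows "((\<lambda>s. \<psi> s x) has_real_derivative frechet_derivative (J \<psi>) (at (t,x)) (1,0)) (at t)"
proof -
  have "((\<lambda>s. (s,x)) has_derivative (\<lambda>h. (h,0))) (at t)"
    by (auto intro!: derivative_eq_intros)
  from diff_chain_at[OF this smooth_hasd[OF assms, of "(t,x)"]]
  have 1: "((\<lambda>s. \<psi> s x) has_derivative (\<lambda>h. frechet_derivative (J \<psi>) (at (t,x)) (h,0))) (at t)"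
    by (simp add: o_def J_def)
  have lin: "linear (frechet_derivative (J \<psi>) (at (t,x)))"
    using linear_frechet_derivative smooth_diff[OF assms] by blast
  have e: "(\<lambda>h. frechet_derivative (J \<psi>) (at (t,x)) (h,0)) = (*) (frechet_derivative (J \<psi>) (at (t,x)) (1,0))"
  proof
    fix h :: real
    have "(h,0::'a) = h *\<^sub>R (1,0)" by simp
    then have "frechet_derivative (J \<psi>) (at (t,x)) (h,0) = h *\<^sub>R frechet_derivative (J \<psi>) (at (t,x)) (1,0)"
      using linear_scale[OF lin, of h "(1,0)"] by metis
    then show "frechet_derivative (J \<psi>) (at (t,x)) (h,0) = frechet_derivative (J \<psi>) (at (t,x)) (1,0) * h"
      by (simp add: mult.commute)
  qed
  from 1 show ?thesis unfolding has_field_derivative_def e .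
qed

lemma lie_eq:
  fixes \<psi> :: "real \<Rightarrow> 'a::euclidean_space \<Rightarrow> real"
  assumes "smooth (J \<psi>)"
  shows "lie F \<psi> t x = frechet_derivative (J \<psi>) (at (t,x)) (1, F t x)"
proof -
  have lin: "linear (frechet_derivative (J \<psi>) (at (t,x)))"
    using linear_frechet_derivative smooth_diff[OF assms] by blast
  have "(1, F t x) = (0, F t x) + (1::real, 0::'a)" by simp
  then have "frechet_derivative (J \<psi>) (at (t,x)) (1, F t x) = frechet_derivative (J \<psi>) (at (t,x)) (0, F t x) + frechet_derivative (J \<psi>) (at (t,x)) (1,0)"
    using linear_add[OF lin] by metis
  then show ?thesis
    unfolding lie_def part_x_fd[OF assms] DERIV_imp_deriv[OF part_t[OF assms]] by simp
qed

lemma smooth_lie: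
  fixes \<psi> :: "real \<Rightarrow> 'a::euclidean_space \<Rightarrow> real"
  assumes "smooth (J \<psi>)" "smooth (J F)"
  shows "smooth (J (lie F \<psi>))"
proof -
  have e: "J (lie F \<psi>) = (\<lambda>p. frechet_derivative (J \<psi>) (at p) ((1,0) + (\<lambda>y. (0,y)) (J F p)))"
    by (simp add: fun_eq_iff J_def lie_eq[OF assms(1)])
  show ?thesis unfolding e
    apply (rule smooth_dir[OF assms(1)])
    apply (rule smooth_add[OF smooth_const])
    apply (rule smooth_linear[OF _ assms(2)])
    by (auto intro: bounded_linear_Pair bounded_linear_zero bounded_linear_ident)
qed

lemma smooth_lie_pow:
  fixes \<psi> :: "real \<Rightarrow> 'a::euclidean_space \<Rightarrow> real"
  assumes "smooth (J \<psi>)" "smooth (J F)"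
  shows "smooth (J (lie_pow F j \<psi>))"
  by (induction j) (auto simp: lie_pow_def assms smooth_lie)

lemma lie_pow_Suc: "lie_pow F (Suc j) \<psi> = lie F (lie_pow F j \<psi>)"
  by (simp add: lie_pow_def)

lemma lieG_cols: "lieG (cols g) \<psi> t x $ l = frechet_derivative (\<psi> t) (at x) (column l (g t x))"
  by (simp add: lieG_def cols_def row_transpose[symmetric] row_def)

lemma bl_column: "bounded_linear (\<lambda>M::real^'m^'n. (0::real, column l M))"
proof -
  have "linear (\<lambda>M::real^'m^'n. (0::real, column l M))"
    by (auto simp: linear_iff column_def vec_eq_iff)
  then show ?thesis by (simp add: linear_conv_bounded_linear)
qed

lemma smooth_lieG:
  fixes \<psi> :: "real \<Rightarrow> real^'n \<Rightarrow> real" and g :: "real \<Rightarrow> real^'n \<Rightarrow> real^'m^'n"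
  assumes "smooth (J \<psi>)" "smooth (J g)"
  shows "smooth (J (\<lambda>t x. lieG (cols g) \<psi> t x $ l))"
proof -
  have e: "J (\<lambda>t x. lieG (cols g) \<psi> t x $ l) = (\<lambda>p. frechet_derivative (J \<psi>) (at p) ((\<lambda>M. (0, column l M)) (J g p)))"
    by (simp add: fun_eq_iff J_def lieG_cols part_x_fd[OF assms(1)])
  show ?thesis unfolding e
    apply (rule smooth_dir[OF assms(1)])
    by (rule smooth_linear[OF bl_column assms(2)])
qed

lemma smooth_nth: "smooth (J h) \<Longrightarrow> smooth (J (\<lambda>s y. h s y $ k))"
proof -
  assume a: "smooth (J h)"
  have "J (\<lambda>s y. h s y $ k) = (\<lambda>p. (\<lambda>v. v $ k) (J h p))" by (simp add: J_def fun_eq_iff)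
  then show ?thesis using smooth_linear[OF bounded_linear_vec_nth a] by simp
qed

lemma diff_fix:
  fixes Q :: "real \<Rightarrow> 'a::euclidean_space \<Rightarrow> 'b::real_normed_vector"
  assumes "smooth (J Q)" "bounded_linear \<pi>"
  shows "(\<lambda>y. Q t (\<pi> y)) differentiable (at y)"
proof -
  have "((\<lambda>y. (t, \<pi> y)) has_derivative (\<lambda>v. (0, \<pi> v))) (at y)"
    by (intro has_derivative_Pair has_derivative_const bounded_linear.has_derivative[OF assms(2)] has_derivative_ident)
  then have "(\<lambda>y. (t, \<pi> y)) differentiable (at y)" using differentiable_def by blast
  from differentiable_chain_at[OF this smooth_diff[OF assms(1)]]
  show ?thesis by (simp add: o_def J_def)
qed

lemma minv_prop: "invertible A \<Longrightarrow> A ** matrix_inv A = mat 1 \<and> matrix_inv A ** A = mat 1"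
  unfolding invertible_def matrix_inv_def by (rule someI_ex)

lemma minv_entry:
  fixes A :: "real^'n^'n"
  assumes "invertible A"
  shows "matrix_inv A $ i $ j = det (\<chi> a b. if b = i then axis j 1 $ a else A$a$b) / det A"
proof -
  let ?x = "matrix_inv A *v axis j 1"
  have h: "A *v ?x = axis j 1" by (simp only: matrix_vector_mul_assoc conjunct1[OF minv_prop[OF assms]] matrix_vector_mul_lid)
  have d: "det A \<noteq> 0" using assms invertible_det_nz by blast
  have "?x = (\<chi> k. det (\<chi> a b. if b = k then axis j 1 $ a else A$a$b) / det A)"
    by (rule iffD1[OF cramer[OF d] h])
  moreover have "?x $ i = matrix_inv A $ i $ j"
    by (simp only: matrix_vector_mult_basis column_def vec_lambda_beta)
  ultimately show ?thesis by (simp only: vec_lambda_beta)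
qed

lemma differentiable_prod':
  fixes f :: "'i \<Rightarrow> 'a::real_normed_vector \<Rightarrow> real"
  assumes "\<forall>i\<in>I. f i differentiable (at x)"
  shows "(\<lambda>x. \<Prod>i\<in>I. f i x) differentiable (at x)"
proof -
  from bchoice[OF assms[unfolded differentiable_def]] obtain f' where "\<forall>i\<in>I. (f i has_derivative f' i) (at x)" by blast
  then show ?thesis unfolding differentiable_def by (blast intro: has_derivative_prod)
qed

lemma diff_det:
  fixes M :: "'a::real_normed_vector \<Rightarrow> real^'n^'n"
  assumes "\<And>a b. (\<lambda>y. M y $ a $ b) differentiable (at y0)"
  shows "(\<lambda>y. det (M y)) differentiable (at y0)"
  unfolding det_def
  apply (rule differentiable_sum, simp)
  apply (intro ballI differentiable_mult differentiable_const differentiable_prod' assms)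
  done

lemma diff_minv:
  fixes M :: "'a::real_normed_vector \<Rightarrow> real^'n^'n"
  assumes inv: "\<And>y. invertible (M y)" and d: "\<And>a b. (\<lambda>y. M y $ a $ b) differentiable (at y0)"
  shows "(\<lambda>y. matrix_inv (M y) $ i $ j) differentiable (at y0)"
proof -
  have e: "(\<lambda>y. matrix_inv (M y) $ i $ j) = (\<lambda>y. det (\<chi> a b. if b = i then axis j 1 $ a else M y$a$b) / det (M y))"
    by (rule ext) (rule minv_entry[OF inv])
  have d1: "(\<lambda>y. det (\<chi> a b. if b = i then axis j 1 $ a else M y$a$b)) differentiable (at y0)"
  proof (rule diff_det)
    fix a b show "(\<lambda>y. (\<chi> a b. if b = i then axis j 1 $ a else M y$a$b) $ a $ b) differentiable (at y0)"
      by (cases "b = i") (simp_all add: d)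
  qed
  have d2: "(\<lambda>y. det (M y)) differentiable (at y0)" by (rule diff_det) (rule d)
  have d3: "det (M y0) \<noteq> 0" using inv invertible_det_nz by blast
  show ?thesis unfolding e by (rule differentiable_divide[OF d1 d2 d3])
qed

lemma lift_hasd:
  fixes \<psi> :: "real \<Rightarrow> 'a::euclidean_space \<Rightarrow> real" and \<pi> :: "'c::real_normed_vector \<Rightarrow> 'a"
  assumes "smooth (J \<psi>)" "bounded_linear \<pi>"
  shows "((\<lambda>y. \<psi> t (\<pi> y)) has_derivative (\<lambda>v. frechet_derivative (\<psi> t) (at (\<pi> y)) (\<pi> v))) (at y)"
proof -
  have "(\<pi> has_derivative \<pi>) (at y)" using assms(2) by (rule bounded_linear_imp_has_derivative)
  from diff_chain_at[OF this, of "\<psi> t"] part_x[OF assms(1), of t "\<pi> y"] frechet_derivative_at[OF part_x[OF assms(1), of t "\<pi> y"]]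
  show ?thesis by (simp add: o_def)
qed

lemma lift_fd:
  fixes \<psi> :: "real \<Rightarrow> 'a::euclidean_space \<Rightarrow> real" and \<pi> :: "'c::real_normed_vector \<Rightarrow> 'a"
  assumes "smooth (J \<psi>)" "bounded_linear \<pi>"
  shows "frechet_derivative (\<lambda>y. \<psi> t (\<pi> y)) (at y) v = frechet_derivative (\<psi> t) (at (\<pi> y)) (\<pi> v)"
  using frechet_derivative_at[OF lift_hasd[OF assms]] by metis

lemma bl_fst: "bounded_linear fst" by (rule bounded_linear_fst)
lemma bl_fstfst: "bounded_linear (\<lambda>x. fst (fst x))"
  by (rule bounded_linear_compose[OF bounded_linear_fst bounded_linear_fst])

lemma LgI:
  fixes \<psi> :: "real \<Rightarrow> 'a::euclidean_space \<Rightarrow> real"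
  assumes "smooth (J \<psi>)"
  shows "lieG gI (\<lambda>t (xI::('a \<times> 'b::euclidean_space) \<times> (real^'m)). \<psi> t (fst (fst xI))) t xI = 0"
proof -
  have "frechet_derivative (\<lambda>y. \<psi> t (fst (fst y))) (at xI) v = frechet_derivative (\<psi> t) (at (fst (fst xI))) (fst (fst v))" for v :: "('a \<times> 'b) \<times> (real^'m)"
    using lift_fd[OF assms bl_fstfst] .
  moreover have "frechet_derivative (\<psi> t) (at (fst (fst xI))) 0 = 0"
    using part_x_lin[OF assms] linear_0 by blast
  ultimately show ?thesis
    by (simp add: lieG_def gI_def vec_eq_iff)
qed

lemma LI:
  fixes \<psi> :: "real \<Rightarrow> 'a::euclidean_space \<Rightarrow> real" 
    and FA :: "real \<Rightarrow> 'a \<times> 'b::euclidean_space \<Rightarrow> 'a \<times> 'b" and GA :: "real \<Rightarrow> 'a \<times> 'b \<Rightarrow> ('a \<times> 'b)^'m"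
  assumes "smooth (J \<psi>)"
  shows "lie (fI FA GA \<beta>) (\<lambda>t xI. \<psi> t (fst (fst xI))) t xI =
     lie FA (\<lambda>t xA. \<psi> t (fst xA)) t (fst xI) + (\<Sum>j\<in>UNIV. s_beta \<beta> (snd xI) $ j * lieG GA (\<lambda>t xA. \<psi> t (fst xA)) t (fst xI) $ j)"
proof -
  let ?D = "frechet_derivative (\<psi> t) (at (fst (fst xI)))"
  have lin: "linear ?D" using part_x_lin[OF assms] .
  have "fst (fst (fI FA GA \<beta> t xI)) = fst (FA t (fst xI)) + (\<Sum>j\<in>UNIV. s_beta \<beta> (snd xI) $ j *\<^sub>R fst (GA t (fst xI) $ j))"
    by (simp add: fI_def colmult_def fst_sum)
  then have "?D (fst (fst (fI FA GA \<beta> t xI))) = ?D (fst (FA t (fst xI))) + (\<Sum>j\<in>UNIV. s_beta \<beta> (snd xI) $ j * ?D (fst (GA t (fst xI) $ j)))"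
    by (simp add: linear_add[OF lin] linear_sum[OF lin] linear_scale[OF lin])
  then show ?thesis
    unfolding lie_def lieG_def
    by (simp add: lift_fd[OF assms bl_fstfst] lift_fd[OF assms bl_fst])
qed

lemma Dg:
  fixes \<psi> :: "real \<Rightarrow> real^'n \<Rightarrow> real" and g :: "real \<Rightarrow> real^'n \<Rightarrow> real^'m^'n"
  assumes "smooth (J \<psi>)"
  shows "frechet_derivative (\<psi> t) (at x) (g t x *v w) = lieG (cols g) \<psi> t x \<bullet> w"
proof -
  have lin: "linear (frechet_derivative (\<psi> t) (at x))" using part_x_lin[OF assms] .
  have "g t x *v w = (\<Sum>l\<in>UNIV. w $ l *\<^sub>R column l (g t x))"
    by (simp add: matrix_mult_sum scalar_mult_eq_scaleR)
  then have "frechet_derivative (\<psi> t) (at x) (g t x *v w) = (\<Sum>l\<in>UNIV. w $ l * frechet_derivative (\<psi> t) (at x) (column l (g t x)))"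
    by (simp add: linear_sum[OF lin] linear_scale[OF lin])
  also have "\<dots> = lieG (cols g) \<psi> t x \<bullet> w"
    by (simp add: inner_vec_def lieG_cols mult.commute)
  finally show ?thesis .
qed

lemma deriv_sep:
  fixes E :: "'a::real_normed_vector \<Rightarrow> real" and K :: "'m::finite \<Rightarrow> 'a \<Rightarrow> real" and r r' :: "real \<Rightarrow> real"
  assumes dE: "E differentiable (at a)" and dK: "\<And>j. K j differentiable (at a)"
    and dr: "\<And>y. (r has_real_derivative r' y) (at y)"
  shows "frechet_derivative (\<lambda>xI. E (fst xI) + (\<Sum>j\<in>UNIV. r (snd xI $ j) * K j (fst xI))) (at (a, \<xi>)) (0, axis i 1) = r' (\<xi> $ i) * K i a"
proof -
  obtain DE where DE: "(E has_derivative DE) (at a)" using dE differentiable_def by blast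
  have "\<forall>j. \<exists>D. (K j has_derivative D) (at a)" using dK differentiable_def by blast
  then obtain DK where DK': "\<forall>j. (K j has_derivative DK j) (at a)" using choice[of "\<lambda>j D. (K j has_derivative D) (at a)"] by blast
  then have DK: "\<And>j. (K j has_derivative DK j) (at a)" by blast
  have hE: "((\<lambda>xI. E (fst xI)) has_derivative (\<lambda>v. DE (fst v))) (at (a, \<xi>))"
  proof -
    have "(E has_derivative DE) (at (fst (a,\<xi>)))" using DE by simp
    from diff_chain_at[OF has_derivative_fst[OF has_derivative_ident] this] show ?thesis by (simp add: o_def)
  qed
  have hK: "((\<lambda>xI. K j (fst xI)) has_derivative (\<lambda>v. DK j (fst v))) (at (a, \<xi>))" for j
  proof -
    have "(K j has_derivative DK j) (at (fst (a,\<xi>)))" using DK by simp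
    from diff_chain_at[OF has_derivative_fst[OF has_derivative_ident] this] show ?thesis by (simp add: o_def)
  qed
  have hr: "((\<lambda>xI. r (snd xI $ j)) has_derivative (\<lambda>v. r' (\<xi> $ j) * (snd v $ j))) (at (a, \<xi>))" for j
  proof -
    have 1: "((\<lambda>xI. snd xI $ j) has_derivative (\<lambda>v. snd v $ j)) (at (a, \<xi>))"
      by (intro bounded_linear_imp_has_derivative bounded_linear_compose[OF bounded_linear_vec_nth bounded_linear_snd])
    have 2: "(r has_derivative (\<lambda>h. r' (\<xi> $ j) * h)) (at (snd (a,\<xi>) $ j))"
      using dr[of "\<xi> $ j"] by (simp add: has_field_derivative_def)
    from diff_chain_at[OF 1 2] show ?thesis by (simp add: o_def)
  qed
  have H: "((\<lambda>xI. E (fst xI) + (\<Sum>j\<in>UNIV. r (snd xI $ j) * K j (fst xI))) has_derivative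
      (\<lambda>v. DE (fst v) + (\<Sum>j\<in>UNIV. r (snd (a,\<xi>) $ j) * DK j (fst v) + r' (\<xi> $ j) * (snd v $ j) * K j (fst (a,\<xi>))))) (at (a, \<xi>))"
    by (intro has_derivative_add has_derivative_sum has_derivative_mult hE hK hr)
  have l0: "DE 0 = 0" using has_derivative_linear[OF DE] linear_0 by blast
  have l0': "DK j 0 = 0" for j using has_derivative_linear[OF DK] linear_0 by blast
  have "frechet_derivative (\<lambda>xI. E (fst xI) + (\<Sum>j\<in>UNIV. r (snd xI $ j) * K j (fst xI))) (at (a, \<xi>)) (0, axis i 1)
     = DE 0 + (\<Sum>j\<in>UNIV. r (\<xi> $ j) * DK j 0 + r' (\<xi> $ j) * (axis i 1 $ j) * K j a)"
    by (simp only: frechet_derivative_at[OF H, symmetric] fst_conv snd_conv)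
  also have "\<dots> = (\<Sum>j\<in>UNIV. r' (\<xi> $ j) * (axis i 1 $ j) * K j a)" by (simp add: l0 l0')
  also have "\<dots> = r' (\<xi> $ i) * K i a"
  proof -
    have "(\<lambda>j. r' (\<xi> $ j) * (axis i 1 $ j) * K j a) = (\<lambda>j. if j = i then r' (\<xi> $ i) * K i a else 0)"
      by (auto simp: axis_def fun_eq_iff)
    then have "(\<Sum>j\<in>UNIV. r' (\<xi> $ j) * (axis i 1 $ j) * K j a) = (\<Sum>j\<in>UNIV. if j = i then r' (\<xi> $ i) * K i a else 0)"
      by (rule arg_cong)
    then show ?thesis by simp
  qed
  finally show ?thesis .
qed

definition rb :: "real \<Rightarrow> real \<Rightarrow> real" where "rb \<beta> y = 2 * \<beta> * (1 / (exp (- y) + 1) - 1/2)"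
definition rb' :: "real \<Rightarrow> real \<Rightarrow> real" where "rb' \<beta> y = 2 * \<beta> * (exp (- y) / (exp (- y) + 1)^2)"

lemma rb_deriv: "(rb \<beta> has_real_derivative rb' \<beta> y) (at y)"
proof -
  have p: "exp (- y) + 1 > 0" by (simp add: add_pos_pos)
  then have n: "exp (- y) + 1 \<noteq> 0" by simp
  have d1: "((\<lambda>y. exp (-y) + 1) has_real_derivative (- exp (-y))) (at y)"
    by (auto intro!: derivative_eq_intros)
  have d2: "((\<lambda>y. inverse (exp (-y) + 1)) has_real_derivative - ((- exp (-y)) * inverse ((exp (-y)+1) ^ Suc (Suc 0)))) (at y)"
    using DERIV_inverse_fun[OF d1 n] .
  have d3: "((\<lambda>y. 2*\<beta>*(inverse (exp(-y)+1) - 1/2)) has_real_derivative 2*\<beta>*(- ((- exp (-y)) * inverse ((exp (-y)+1) ^ Suc (Suc 0))) - 0)) (at y)"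
    by (intro DERIV_cmult DERIV_diff d2 DERIV_const)
  have e1: "rb \<beta> = (\<lambda>y. 2*\<beta>*(inverse (exp(-y)+1) - 1/2))"
    by (simp add: rb_def fun_eq_iff inverse_eq_divide)
  have e2: "2*\<beta>*(- ((- exp (-y)) * inverse ((exp (-y)+1) ^ Suc (Suc 0))) - 0) = rb' \<beta> y"
    by (simp add: rb'_def divide_inverse power2_eq_square)
  show ?thesis using d3 unfolding e1 e2 .
qed

lemma rb'_pos: "\<beta> > 0 \<Longrightarrow> rb' \<beta> y > 0"
proof -
  assume b: "\<beta> > 0"
  have p: "exp (- y) + 1 > 0" by (simp add: add_pos_pos)
  show ?thesis unfolding rb'_def using b p by (intro divide_pos_pos mult_pos_pos) auto
qed

lemma s_beta_rb: "s_beta \<beta> \<xi> $ j = rb \<beta> (\<xi> $ j)"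
  by (simp add: s_beta_def rb_def)

lemma col_mm: "column i (A ** B) = A *v column i (B::real^'k^'n)"
  by (simp add: vec_eq_iff column_def matrix_matrix_mult_def matrix_vector_mult_def)

lemma col_diag: "column i (A ** diagm z) = z $ i *\<^sub>R column i (A::real^'k^'n)"
proof -
  have "(\<Sum>k\<in>UNIV. A $ p $ k * (if k = i then z $ k else 0)) = A $ p $ i * z $ i" for p
  proof -
    have "(\<lambda>k. A $ p $ k * (if k = i then z $ k else 0)) = (\<lambda>k. if k = i then A $ p $ i * z $ i else 0)"
      by (auto simp: fun_eq_iff)
    then have "(\<Sum>k\<in>UNIV. A $ p $ k * (if k = i then z $ k else 0)) = (\<Sum>k\<in>UNIV. if k = i then A $ p $ i * z $ i else 0)"
      by (rule arg_cong)
    then show ?thesis by simp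
  qed
  then show ?thesis
    by (simp add: vec_eq_iff column_def matrix_matrix_mult_def diagm_def mult.commute)
qed

lemma col_comb: "column i (A ** B ** diagm z) = z $ i *\<^sub>R (A *v column i (B::real^'k^'l))"
  by (rule trans[OF col_diag]) (simp add: col_mm)

lemma col_neg: "column i (- A) = - column i (A::real^'k^'n)"
  by (simp add: vec_eq_iff column_def)

lemma LA:
  fixes \<psi> :: "real \<Rightarrow> real^'n \<Rightarrow> real" and g :: "real \<Rightarrow> real^'n \<Rightarrow> real^'m^'n"
    and idx :: "'z::finite \<Rightarrow> 'm \<times> nat"
  assumes "smooth (J \<psi>)"
  shows "lieG (gA f g \<phi> \<rho> idx) (\<lambda>t xA. \<psi> t (fst xA)) t xA $ i =
     - (zvec idx (snd xA) $ i) * (lieG (cols g) \<psi> t (fst xA) \<bullet> column i (matrix_inv (Omega_g f g \<phi> \<rho> t (fst xA))))"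
proof -
  let ?D = "frechet_derivative (\<psi> t) (at (fst xA))"
  have lin: "linear ?D" using part_x_lin[OF assms] .
  have "fst (gA f g \<phi> \<rho> idx t xA $ i) = - (zvec idx (snd xA) $ i *\<^sub>R (g t (fst xA) *v column i (matrix_inv (Omega_g f g \<phi> \<rho> t (fst xA)))))"
    by (simp add: gA_def Let_def col_neg col_comb)
  then have "?D (fst (gA f g \<phi> \<rho> idx t xA $ i)) = - (zvec idx (snd xA) $ i * ?D (g t (fst xA) *v column i (matrix_inv (Omega_g f g \<phi> \<rho> t (fst xA)))))"
    by (simp add: linear_neg[OF lin] linear_scale[OF lin])
  moreover have "lieG (gA f g \<phi> \<rho> idx) (\<lambda>t xA. \<psi> t (fst xA)) t xA $ i = ?D (fst (gA f g \<phi> \<rho> idx t xA $ i))"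
    by (simp add: lieG_def lift_fd[OF assms bl_fst])
  ultimately show ?thesis by (simp add: Dg[OF assms])
qed

lemma LF:
  fixes \<psi> :: "real \<Rightarrow> real^'n \<Rightarrow> real" and g :: "real \<Rightarrow> real^'n \<Rightarrow> real^'m^'n"
    and idx :: "'z::finite \<Rightarrow> 'm \<times> nat"
  assumes "smooth (J \<psi>)"
  shows "lie (fA f g \<phi> \<rho> idx) (\<lambda>t xA. \<psi> t (fst xA)) t xA =
     lie f \<psi> t (fst xA) - lieG (cols g) \<psi> t (fst xA) \<bullet> (matrix_inv (Omega_g f g \<phi> \<rho> t (fst xA)) *v Omega_f f \<phi> \<rho> idx t (fst xA) (snd xA))"
proof -
  let ?D = "frechet_derivative (\<psi> t) (at (fst xA))"
  have lin: "linear ?D" using part_x_lin[OF assms] .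
  have "fst (fA f g \<phi> \<rho> idx t xA) = f t (fst xA) - g t (fst xA) *v (matrix_inv (Omega_g f g \<phi> \<rho> t (fst xA)) *v Omega_f f \<phi> \<rho> idx t (fst xA) (snd xA))"
    by (simp add: fA_def Let_def)
  then have "?D (fst (fA f g \<phi> \<rho> idx t xA)) = ?D (f t (fst xA)) - ?D (g t (fst xA) *v (matrix_inv (Omega_g f g \<phi> \<rho> t (fst xA)) *v Omega_f f \<phi> \<rho> idx t (fst xA) (snd xA)))"
    by (simp add: linear_diff[OF lin])
  then show ?thesis
    unfolding lie_def by (simp add: lift_fd[OF assms bl_fst] Dg[OF assms])
qed

lemma c_zero:
  fixes A :: "real^'m^'m"
  assumes "invertible A" "\<And>i. c \<bullet> column i (matrix_inv A) = 0"
  shows "c = 0"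
proof -
  have 1: "c v* matrix_inv A = 0"
    using assms(2) by (simp add: vec_eq_iff vector_matrix_mult_def inner_vec_def column_def mult.commute)
  have "c = c v* (matrix_inv A ** A)" using minv_prop[OF assms(1)] by simp
  also have "\<dots> = (c v* matrix_inv A) v* A" by (simp add: vector_matrix_mul_assoc)
  also have "\<dots> = 0" unfolding 1 by (simp add: vec_eq_iff vector_matrix_mult_def)
  finally show ?thesis .
qed

lemma zero_col_rank:
  fixes A :: "real^'m^'m"
  assumes "\<And>k. A $ k $ i = 0"
  shows "rank A < CARD('m)"
proof -
  have "A *v axis i 1 = 0" using assms by (simp add: matrix_vector_mult_basis column_def vec_eq_iff)
  moreover have "axis i 1 \<noteq> (0::real^'m)" by (simp add: axis_eq_0_iff)
  ultimately have "rank A \<noteq> CARD('m)" using matrix_nonfull_linear_equations_eq by blast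
  then show ?thesis using rank_bound[of A] by simp
qed

theorem corollary1:
  fixes f :: "real \<Rightarrow> real^'n \<Rightarrow> real^'n"
    and g :: "real \<Rightarrow> real^'n \<Rightarrow> real^'m^'n"
    and h :: "real \<Rightarrow> real^'n \<Rightarrow> real^'m"
    and \<phi> :: "real \<Rightarrow> real^'n \<Rightarrow> real^'m"
    and \<rho> :: "'m \<Rightarrow> nat"
    and idx :: "'z::finite \<Rightarrow> 'm \<times> nat"
    and \<sigma> :: "'m \<Rightarrow> nat"
    and \<beta> t0 :: real
    and xA0 :: "(real^'n) \<times> (real^'z)"
    and \<xi>0 :: "real^'m"
  defines "FA \<equiv> fA f g \<phi> \<rho> idx"
    and "GA \<equiv> gA f g \<phi> \<rho> idx"
    and "FI \<equiv> fI (fA f g \<phi> \<rho> idx) (gA f g \<phi> \<rho> idx) \<beta>"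
    and "hA \<equiv> (\<lambda>k t xA. h t (fst xA) $ k)"
    and "hI \<equiv> (\<lambda>k t xI. h t (fst (fst xI)) $ k)"
  assumes smooth_f: "smooth (\<lambda>p. f (fst p) (snd p))"
    and smooth_g: "smooth (\<lambda>p. g (fst p) (snd p))"
    and smooth_h: "smooth (\<lambda>p. h (fst p) (snd p))"
    and smooth_phi: "smooth (\<lambda>p. \<phi> (fst p) (snd p))"
    and rho_pos: "\<And>k. \<rho> k \<ge> 1"
    and reldeg_zero: "\<And>k i t x. i + 2 \<le> \<rho> k \<Longrightarrow>
           lieG (cols g) (lie_pow f i (\<lambda>s y. \<phi> s y $ k)) t x = 0"
    and reldeg_nz: "\<And>k t x. lieG (cols g) (lie_pow f (\<rho> k - 1) (\<lambda>s y. \<phi> s y $ k)) t x \<noteq> 0"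
    and Omega_inv: "\<And>t x. invertible (Omega_g f g \<phi> \<rho> t x)"
    and idx_bij: "bij_betw idx UNIV {(k, j). j < \<rho> k}"
    and beta_pos: "\<beta> > 0"
    and sigma_pos: "\<And>k. \<sigma> k \<ge> 1"
    and hA_zero: "\<And>k i t xA. 1 \<le> i \<Longrightarrow> i \<le> \<sigma> k - 1 \<Longrightarrow>
           lieG GA (lie_pow FA (i - 1) (hA k)) t xA = 0"
    and hA_nz: "\<And>k. lieG GA (lie_pow FA (\<sigma> k - 1) (hA k)) t0 xA0 \<noteq> 0"
  shows "(\<forall>k i t xI. 1 \<le> i \<and> i \<le> \<sigma> k \<longrightarrow> lieG gI (lie_pow FI (i - 1) (hI k)) t xI = 0)
       \<and> (\<forall>k. lieG gI (lie_pow FI (\<sigma> k) (hI k)) t0 (xA0, \<xi>0) \<noteq> 0)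
       \<and> (\<forall>t xI. (\<exists>i. zvec idx (snd (fst xI)) $ i = 0) \<longrightarrow>
            rank (\<chi> k. lieG gI (lie_pow FI (\<sigma> k) (hI k)) t xI) < CARD('m))"
proof -
  have Jeq: "J F = (\<lambda>p. F (fst p) (snd p))" for F :: "real \<Rightarrow> real^'n \<Rightarrow> 'q"
    by (simp add: fun_eq_iff J_def)
  have sf: "smooth (J f)" using smooth_f by (simp only: Jeq)
  have sg: "smooth (J g)" using smooth_g by (simp only: Jeq)
  have sh: "smooth (J h)" using smooth_h by (simp only: Jeq)
  have sphi: "smooth (J \<phi>)" using smooth_phi by (simp only: Jeq)
  define \<psi> where "\<psi> k j = lie_pow f j (\<lambda>s y. h s y $ k)" for k j
  have s\<psi>: "smooth (J (\<psi> k j))" for k j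
    unfolding \<psi>_def by (rule smooth_lie_pow[OF smooth_nth[OF sh] sf])
  define zt1 :: "real^'z" where "zt1 = (\<chi> q. 1)"
  have zt1: "zvec idx zt1 $ i = 1" for i by (simp add: zt1_def zvec_def zc_def)
  have czero: "lieG (cols g) (\<psi> k j) t x = 0"
    if H: "\<And>t xA. lieG GA (\<lambda>t xA. \<psi> k j t (fst xA)) t xA = 0" for k j t x
  proof (rule c_zero[OF Omega_inv])
    fix i
    have "lieG GA (\<lambda>t xA. \<psi> k j t (fst xA)) t (x, zt1) $ i = 0" using H by simp
    then show "lieG (cols g) (\<psi> k j) t x \<bullet> column i (matrix_inv (Omega_g f g \<phi> \<rho> t x)) = 0"
      unfolding GA_def LA[OF s\<psi>] by (simp add: zt1)
  qed
  have P: "\<forall>k. j < \<sigma> k \<longrightarrow> lie_pow FA j (hA k) = (\<lambda>t xA. \<psi> k j t (fst xA))" for j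
  proof (induction j)
    case 0
    then show ?case by (simp add: lie_pow_def hA_def \<psi>_def)
  next
    case (Suc j)
    show ?case
    proof (intro allI impI)
      fix k assume a: "Suc j < \<sigma> k"
      then have IH: "lie_pow FA j (hA k) = (\<lambda>t xA. \<psi> k j t (fst xA))" using Suc by simp
      have z: "lieG GA (\<lambda>t xA. \<psi> k j t (fst xA)) t xA = 0" for t xA
        using hA_zero[of "Suc j" k t xA] a IH by simp
      have c0: "lieG (cols g) (\<psi> k j) t x = 0" for t x by (rule czero[OF z])
      have "lie_pow FA (Suc j) (hA k) = lie FA (\<lambda>t xA. \<psi> k j t (fst xA))"
        by (simp add: lie_pow_Suc IH)
      also have "\<dots> = (\<lambda>t xA. \<psi> k (Suc j) t (fst xA))"
      proof (intro ext)
        fix t xA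
        have "lie FA (\<lambda>t xA. \<psi> k j t (fst xA)) t xA = lie f (\<psi> k j) t (fst xA)"
          unfolding FA_def LF[OF s\<psi>] c0 by simp
        also have "\<dots> = \<psi> k (Suc j) t (fst xA)" by (simp add: \<psi>_def lie_pow_Suc)
        finally show "lie FA (\<lambda>t xA. \<psi> k j t (fst xA)) t xA = \<psi> k (Suc j) t (fst xA)" .
      qed
      finally show "lie_pow FA (Suc j) (hA k) = (\<lambda>t xA. \<psi> k (Suc j) t (fst xA))" .
    qed
  qed
  have Q: "\<forall>k. j < \<sigma> k \<longrightarrow> lie_pow FI j (hI k) = (\<lambda>t xI. \<psi> k j t (fst (fst xI)))" for j
  proof (induction j)
    case 0
    then show ?case by (simp add: lie_pow_def hI_def \<psi>_def)
  next
    case (Suc j)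
    show ?case
    proof (intro allI impI)
      fix k assume a: "Suc j < \<sigma> k"
      then have IH: "lie_pow FI j (hI k) = (\<lambda>t xI. \<psi> k j t (fst (fst xI)))" using Suc by simp
      have z: "lieG GA (\<lambda>t xA. \<psi> k j t (fst xA)) t xA = 0" for t xA
        using hA_zero[of "Suc j" k t xA] a P[of j] by simp
      have e: "lie FA (\<lambda>t xA. \<psi> k j t (fst xA)) = (\<lambda>t xA. \<psi> k (Suc j) t (fst xA))"
        using P[of "Suc j"] P[of j] a by (simp add: lie_pow_Suc)
      have "lie_pow FI (Suc j) (hI k) = lie FI (\<lambda>t xI. \<psi> k j t (fst (fst xI)))"
        by (simp add: lie_pow_Suc IH)
      also have "\<dots> = (\<lambda>t xI. \<psi> k (Suc j) t (fst (fst xI)))"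
        unfolding FI_def
        by (simp add: fun_eq_iff LI[OF s\<psi>] z[unfolded GA_def] e[unfolded FA_def])
      finally show "lie_pow FI (Suc j) (hI k) = (\<lambda>t xI. \<psi> k (Suc j) t (fst (fst xI)))" .
    qed
  qed
  have part1: "\<forall>k i t xI. 1 \<le> i \<and> i \<le> \<sigma> k \<longrightarrow> lieG gI (lie_pow FI (i - 1) (hI k)) t xI = 0"
  proof (intro allI impI)
    fix k i t xI assume a: "1 \<le> i \<and> i \<le> \<sigma> k"
    then have "i - 1 < \<sigma> k" by linarith
    then show "lieG gI (lie_pow FI (i - 1) (hI k)) t xI = 0"
      using Q[of "i - 1"] LgI[OF s\<psi>] by simp
  qed
  define E where "E k t xA = lie FA (\<lambda>t xA. \<psi> k (\<sigma> k - 1) t (fst xA)) t xA" for k t xA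
  define K where "K k j t xA = lieG GA (\<lambda>t xA. \<psi> k (\<sigma> k - 1) t (fst xA)) t xA $ j" for k j t xA
  have top: "lie_pow FI (\<sigma> k) (hI k) t = (\<lambda>xI. E k t (fst xI) + (\<Sum>j\<in>UNIV. rb \<beta> (snd xI $ j) * K k j t (fst xI)))" for k t
  proof -
    have sigS: "\<sigma> k = Suc (\<sigma> k - 1)" using sigma_pos[of k] by simp
    have "lie_pow FI (\<sigma> k) (hI k) = lie FI (lie_pow FI (\<sigma> k - 1) (hI k))"
      by (subst sigS) (simp only: lie_pow_Suc)
    also have "\<dots> = lie FI (\<lambda>t xI. \<psi> k (\<sigma> k - 1) t (fst (fst xI)))"
      using Q[of "\<sigma> k - 1"] sigma_pos[of k] by simp
    finally have 1: "lie_pow FI (\<sigma> k) (hI k) = lie FI (\<lambda>t xI. \<psi> k (\<sigma> k - 1) t (fst (fst xI)))" .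
    show ?thesis
      unfolding 1 unfolding FI_def
      by (simp add: fun_eq_iff LI[OF s\<psi>] s_beta_rb E_def K_def FA_def GA_def)
  qed
  have dz: "(\<lambda>xA. snd xA $ q) differentiable (at xA)" for q and xA :: "(real^'n) \<times> (real^'z)"
    by (intro bounded_linear_imp_differentiable bounded_linear_compose[OF bounded_linear_vec_nth bounded_linear_snd])
  have dc: "(\<lambda>xA. lieG (cols g) (\<psi> k j) t (fst xA) $ l) differentiable (at xA)" for k j t l and xA :: "(real^'n) \<times> (real^'z)"
    using diff_fix[OF smooth_lieG[OF s\<psi>[of k j] sg, where l=l] bl_fst, of t xA] by simp
  have dOm: "(\<lambda>xA. Omega_g f g \<phi> \<rho> t (fst xA) $ a $ b) differentiable (at xA)" for t a b and xA :: "(real^'n) \<times> (real^'z)"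
    using diff_fix[OF smooth_lieG[OF smooth_lie_pow[OF smooth_nth[OF sphi, where k=a] sf, where j="\<rho> a - 1"] sg, where l=b] bl_fst, of t xA]
    by (simp add: Omega_g_def)
  have dOi: "(\<lambda>xA. matrix_inv (Omega_g f g \<phi> \<rho> t (fst xA)) $ a $ b) differentiable (at xA)" for t a b and xA :: "(real^'n) \<times> (real^'z)"
    by (rule diff_minv[where M="\<lambda>xA. Omega_g f g \<phi> \<rho> t (fst xA)"]) (use Omega_inv dOm in auto)
  have dK: "K k j t differentiable (at xA)" for k j t xA
  proof -
    have e: "K k j t = (\<lambda>xA. - (snd xA $ inv idx (j, 0)) * (\<Sum>l\<in>UNIV. lieG (cols g) (\<psi> k (\<sigma> k - 1)) t (fst xA) $ l * matrix_inv (Omega_g f g \<phi> \<rho> t (fst xA)) $ l $ j))"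
      by (simp add: fun_eq_iff K_def GA_def LA[OF s\<psi>] inner_vec_def column_def zvec_def zc_def)
    show ?thesis unfolding e
      by (intro differentiable_minus differentiable_mult differentiable_sum ballI finite dz dc dOi)
  qed
  have dphi: "(\<lambda>xA. lie_pow f (\<rho> p) (\<lambda>s y. \<phi> s y $ p) t (fst xA)) differentiable (at xA)" for p t and xA :: "(real^'n) \<times> (real^'z)"
    using diff_fix[OF smooth_lie_pow[OF smooth_nth[OF sphi, where k=p] sf, where j="\<rho> p"] bl_fst, of t xA] by simp
  have dlie: "(\<lambda>xA. lie f (\<psi> k j) t (fst xA)) differentiable (at xA)" for k j t and xA :: "(real^'n) \<times> (real^'z)"
    using diff_fix[OF smooth_lie[OF s\<psi>[of k j] sf] bl_fst, of t xA] by simp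
  have dE: "E k t differentiable (at xA)" for k t xA
  proof -
    have e: "E k t = (\<lambda>xA. lie f (\<psi> k (\<sigma> k - 1)) t (fst xA) - (\<Sum>l\<in>UNIV. lieG (cols g) (\<psi> k (\<sigma> k - 1)) t (fst xA) $ l *
        (\<Sum>p\<in>UNIV. matrix_inv (Omega_g f g \<phi> \<rho> t (fst xA)) $ l $ p *
           ((1/2) * (\<Sum>jj\<in>{1..\<rho> p - 1}. real ((\<rho> p - 1 + 1) choose jj) * snd xA $ inv idx (p, \<rho> p - 1 + 1 - jj) * snd xA $ inv idx (p, jj))
            + lie_pow f (\<rho> p) (\<lambda>s y. \<phi> s y $ p) t (fst xA)))))"
      by (simp add: fun_eq_iff E_def FA_def LF[OF s\<psi>] inner_vec_def matrix_vector_mult_def Omega_f_def Scoef_def zc_def)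
    show ?thesis unfolding e
      by (intro differentiable_diff differentiable_add differentiable_mult differentiable_sum ballI finite
          differentiable_const dz dc dOi dphi dlie finite_atLeastAtMost)
  qed
  have Gam: "lieG gI (lie_pow FI (\<sigma> k) (hI k)) t xI $ j = rb' \<beta> (snd xI $ j) * K k j t (fst xI)" for k t xI j
  proof -
    have "lieG gI (lie_pow FI (\<sigma> k) (hI k)) t xI $ j =
       frechet_derivative (\<lambda>xI. E k t (fst xI) + (\<Sum>j\<in>UNIV. rb \<beta> (snd xI $ j) * K k j t (fst xI))) (at (fst xI, snd xI)) (0, axis j 1)"
      by (simp add: lieG_def gI_def top)
    also have "\<dots> = rb' \<beta> (snd xI $ j) * K k j t (fst xI)"
      by (rule deriv_sep[OF dE dK rb_deriv])
    finally show ?thesis .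
  qed
  have part2: "\<forall>k. lieG gI (lie_pow FI (\<sigma> k) (hI k)) t0 (xA0, \<xi>0) \<noteq> 0"
  proof
    fix k
    have "lieG GA (\<lambda>t xA. \<psi> k (\<sigma> k - 1) t (fst xA)) t0 xA0 \<noteq> 0"
      using hA_nz[of k] P[of "\<sigma> k - 1"] sigma_pos[of k] by simp
    then obtain j where j: "K k j t0 xA0 \<noteq> 0" by (auto simp: K_def vec_eq_iff)
    have "lieG gI (lie_pow FI (\<sigma> k) (hI k)) t0 (xA0, \<xi>0) $ j \<noteq> 0"
      unfolding Gam using j rb'_pos[OF beta_pos] by (simp add: less_imp_neq[symmetric])
    then show "lieG gI (lie_pow FI (\<sigma> k) (hI k)) t0 (xA0, \<xi>0) \<noteq> 0" by auto
  qed
  have part3: "\<forall>t xI. (\<exists>i. zvec idx (snd (fst xI)) $ i = 0) \<longrightarrow>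
            rank (\<chi> k. lieG gI (lie_pow FI (\<sigma> k) (hI k)) t xI) < CARD('m)"
  proof (intro allI impI)
    fix t and xI :: "((real^'n) \<times> (real^'z)) \<times> (real^'m)" assume "\<exists>i. zvec idx (snd (fst xI)) $ i = 0"
    then obtain i where i: "zvec idx (snd (fst xI)) $ i = 0" by blast
    show "rank (\<chi> k. lieG gI (lie_pow FI (\<sigma> k) (hI k)) t xI) < CARD('m)"
    proof (rule zero_col_rank)
      fix k
      have "K k i t (fst xI) = 0" by (simp add: K_def GA_def LA[OF s\<psi>] i)
      then show "(\<chi> k. lieG gI (lie_pow FI (\<sigma> k) (hI k)) t xI) $ k $ i = 0" by (simp add: Gam)
    qed
  qed
  show ?thesis using part1 part2 part3 by blast
qed

end
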